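(* Let $f:\Omega\to[0,M]$ be weakly canalizing with respect to coordinate $j$ and $(a,b)\in\Omega_j\times\mathbb{R}$, where $k_j\ge2$. Let $f'=f\restriction_{x_j\ne a}$, defined on $\Omega'=\Omega_1\times\cdots\times(\Omega_j\setminus\{a\})\times\cdots\times\Omega_n$. Then $$\operatorname{AS}[f]\le \frac{M^2}{4}+\frac{k_j-1}{k_j}\,\operatorname{AS}[f'],$$ where $\operatorname{AS}[f']$ is computed on the product $\Omega'$ with its own uniform product measure.
   Context: Let $\Omega_1,\ldots,\Omega_n$ be finite sets with $|\Omega_i|=k_i\ge1$, and $\Omega=\prod_i\Omega_i$ with the uniform product probability measure. Weakly canalizing: $f$ is weakly canalizing with respect to $j$ and $(a,b)$ if $f(x)=b$ for all $x\in\Omega$ with $x_j=a$. Influence and average sensitivity: for a product $\Pi=\prod_i P_i$ of finite nonempty sets with the uniform product measure and $g:\Pi\to\mathbb{R}$, let $\operatorname{Var}_i[g](x)$ be the variance of $y_i\mapsto g(x_1,\ldots,x_{i-1},y_i,x_{i+1},\ldots,x_n)$ for $y_i$ uniform on $P_i$. Then: - $\operatorname{Inf}_i[g]=\mathbf{E}_x[\operatorname{Var}_i[g](x)]$; - $\operatorname{AS}[g]=\sum_{i=1}^n\operatorname{Inf}_i[g]$. *)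

theory Defs
  imports "HOL-Library.FuncSet" Complex_Main
begin

definition prodsp :: "nat \<Rightarrow> (nat \<Rightarrow> 'a set) \<Rightarrow> (nat \<Rightarrow> 'a) set" where
  "prodsp n P = PiE {..<n} P"

definition avg :: "'b set \<Rightarrow> ('b \<Rightarrow> real) \<Rightarrow> real" where
  "avg S h = (\<Sum>s\<in>S. h s) / real (card S)"

definition coord_var :: "(nat \<Rightarrow> 'a set) \<Rightarrow> ((nat \<Rightarrow> 'a) \<Rightarrow> real) \<Rightarrow> nat \<Rightarrow> (nat \<Rightarrow> 'a) \<Rightarrow> real" where
  "coord_var P g i x =
     avg (P i) (\<lambda>y. (g (x(i := y)) - avg (P i) (\<lambda>z. g (x(i := z)))) ^ 2)"

definition influence :: "nat \<Rightarrow> (nat \<Rightarrow> 'a set) \<Rightarrow> ((nat \<Rightarrow> 'a) \<Rightarrow> real) \<Rightarrow> nat \<Rightarrow> real" where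
  "influence n P g i = avg (prodsp n P) (\<lambda>x. coord_var P g i x)"

definition avg_sens :: "nat \<Rightarrow> (nat \<Rightarrow> 'a set) \<Rightarrow> ((nat \<Rightarrow> 'a) \<Rightarrow> real) \<Rightarrow> real" where
  "avg_sens n P g = (\<Sum>i<n. influence n P g i)"

definition weakly_canalizing ::
  "nat \<Rightarrow> (nat \<Rightarrow> 'a set) \<Rightarrow> ((nat \<Rightarrow> 'a) \<Rightarrow> real) \<Rightarrow> nat \<Rightarrow> 'a \<Rightarrow> real \<Rightarrow> bool" where
  "weakly_canalizing n P f j a b = (\<forall>x\<in>prodsp n P. x j = a \<longrightarrow> f x = b)"

end

theory Submission
  imports Defs
begin

lemma avg_nonneg: "(\<And>s. s \<in> S \<Longrightarrow> 0 \<le> h s) \<Longrightarrow> 0 \<le> avg S h"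
  unfolding avg_def by (intro divide_nonneg_nonneg sum_nonneg) auto

lemma coord_var_nonneg: "0 \<le> coord_var P g i x"
  unfolding coord_var_def by (rule avg_nonneg) simp

lemma avg_le:
  assumes "finite S" "S \<noteq> {}" "\<And>s. s \<in> S \<Longrightarrow> h s \<le> c"
  shows "avg S h \<le> c"
proof -
  have "(\<Sum>s\<in>S. h s) \<le> (\<Sum>s\<in>S. c)" using assms(3) by (rule sum_mono)
  moreover have "card S > 0" using assms by auto
  ultimately show ?thesis unfolding avg_def by (simp add: divide_le_eq mult.commute)
qed

lemma avg_const: "finite S \<Longrightarrow> S \<noteq> {} \<Longrightarrow> avg S (\<lambda>_. c) = c"
  unfolding avg_def by simp

lemma popoviciu:
  assumes fin: "finite S" and ne: "S \<noteq> {}" and bd: "\<And>s. s \<in> S \<Longrightarrow> 0 \<le> h s \<and> h s \<le> M"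
  shows "avg S (\<lambda>y. (h y - avg S h)^2) \<le> M^2/4"
proof -
  define m where "m = avg S h"
  define c where "c = real (card S)"
  have c: "c > 0" using fin ne c_def by auto
  have sh: "(\<Sum>s\<in>S. h s) = c * m" using c unfolding m_def avg_def c_def by simp
  have "(\<Sum>y\<in>S. (h y - m)^2) = (\<Sum>y\<in>S. h y ^2) - 2*m*(\<Sum>y\<in>S. h y) + c * m^2"
    by (simp add: power2_diff sum.distrib sum_subtractf sum_distrib_left sum_distrib_right c_def algebra_simps)
  also have "\<dots> = (\<Sum>y\<in>S. h y ^2) - c*m^2" using sh by (simp add: power2_eq_square)
  also have "\<dots> \<le> (\<Sum>y\<in>S. M * h y) - c*m^2"
  proof -
    have "(\<Sum>y\<in>S. h y ^2) \<le> (\<Sum>y\<in>S. M * h y)"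
      by (rule sum_mono) (use bd in \<open>auto simp: power2_eq_square intro: mult_right_mono\<close>)
    thus ?thesis by simp
  qed
  also have "\<dots> = c * (M*m - m^2)" using sh by (simp add: sum_distrib_left[symmetric] algebra_simps)
  also have "\<dots> \<le> c * (M^2/4)"
  proof -
    have "M*m - m^2 \<le> M^2/4" using sum_squares_ge_zero[of "M/2 - m" 0]
      by (simp add: power2_eq_square algebra_simps)
    thus ?thesis using c by simp
  qed
  finally have "(\<Sum>y\<in>S. (h y - m)^2) \<le> c * (M^2/4)" .
  moreover have "avg S (\<lambda>y. (h y - m)^2) = (\<Sum>y\<in>S. (h y - m)^2) / c"
    by (simp add: avg_def c_def)
  ultimately show ?thesis using c unfolding m_def[symmetric]
    by (simp add: divide_le_eq mult.commute)
qed

lemma coord_var_cong: "P i = Q i \<Longrightarrow> coord_var P g i x = coord_var Q g i x"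
  unfolding coord_var_def by simp

lemma main_aux:
  fixes n :: nat and Om :: "nat \<Rightarrow> 'a set" and f :: "(nat \<Rightarrow> 'a) \<Rightarrow> real"
  assumes fin: "\<And>i. i < n \<Longrightarrow> finite (Om i)"
    and ne: "\<And>i. i < n \<Longrightarrow> Om i \<noteq> {}"
    and j: "j < n" and a: "a \<in> Om j"
    and kj: "card (Om j) \<ge> 2"
    and canal: "weakly_canalizing n Om f j a b"
    and i: "i < n" "i \<noteq> j"
  shows "influence n Om f i = (real (card (Om j)) - 1) / real (card (Om j)) * influence n (Om(j := Om j - {a})) f i"
proof -
  define Om' where "Om' = Om(j := Om j - {a})"
  define A where "A = PiE {..<n} Om"
  define A' where "A' = PiE {..<n} Om'"
  define k where "k = card (Om j)"
  have finA: "finite A" unfolding A_def using fin by (auto intro: finite_PiE)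
  have A'eq: "A' = {x \<in> A. x j \<noteq> a}"
    unfolding A'_def A_def Om'_def using j by (auto simp: PiE_def Pi_def split: if_splits)
  have zero: "coord_var Om f i x = 0" if "x \<in> A" "x j = a" for x
  proof -
    have "f (x(i := y)) = b" if "y \<in> Om i" for y
    proof -
      have "x(i := y) \<in> PiE {..<n} Om" using that \<open>x \<in> A\<close> i unfolding A_def
        using PiE_fun_upd[of y Om i x "{..<n}"] by (simp add: insert_absorb)
      moreover have "(x(i := y)) j = a" using \<open>x j = a\<close> i by simp
      ultimately show ?thesis using canal unfolding weakly_canalizing_def prodsp_def by blast
    qed
    hence "coord_var Om f i x = avg (Om i) (\<lambda>y. (b - avg (Om i) (\<lambda>z. b))^2)"
      unfolding coord_var_def avg_def by (simp cong: sum.cong)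
    also have "\<dots> = 0" using fin[OF i(1)] ne[OF i(1)] by (simp add: avg_const)
    finally show ?thesis .
  qed
  have sumA: "(\<Sum>x\<in>A. coord_var Om f i x) = (\<Sum>x\<in>A'. coord_var Om' f i x)"
  proof -
    have "(\<Sum>x\<in>A. coord_var Om f i x) = (\<Sum>x\<in>{x\<in>A. x j \<noteq> a}. coord_var Om f i x)"
      using finA zero by (intro sum.mono_neutral_right) auto
    also have "\<dots> = (\<Sum>x\<in>A'. coord_var Om' f i x)"
      unfolding A'eq using i by (intro sum.cong refl coord_var_cong) (simp add: Om'_def)
    finally show ?thesis .
  qed
  have cA: "card A = (\<Prod>l\<in>{..<n}. card (Om l))" unfolding A_def by (simp add: card_PiE)
  have cA': "card A' = (\<Prod>l\<in>{..<n}. card (Om' l))" unfolding A'_def by (simp add: card_PiE)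
  define R where "R = (\<Prod>l\<in>{..<n}-{j}. card (Om l))"
  have R': "R = (\<Prod>l\<in>{..<n}-{j}. card (Om' l))" unfolding R_def Om'_def by (intro prod.cong) auto
  have cA2: "card A = k * R" unfolding cA R_def k_def using j by (simp add: prod.remove)
  have cA'2: "card A' = (k - 1) * R" unfolding cA' R' k_def using j fin[OF j] a
    by (simp add: prod.remove Om'_def)
  have Rpos: "R > 0" unfolding R_def using fin ne by (auto intro!: prod_pos simp: card_gt_0_iff)
  have k2: "k \<ge> 2" using kj k_def by simp
  have eq: "real (card A) = real k * real R" "real (card A') = (real k - 1) * real R"
    using cA2 cA'2 k2 by (auto simp: of_nat_diff)
  show ?thesis
    unfolding influence_def prodsp_def A_def[symmetric] Om'_def[symmetric] A'_def[symmetric]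
      avg_def sumA eq k_def[symmetric]
    using Rpos k2 by (simp add: field_simps)
qed

theorem mainTheorem4:
  fixes n :: nat and Om :: "nat \<Rightarrow> 'a set" and f :: "(nat \<Rightarrow> 'a) \<Rightarrow> real"
    and M :: real and j :: nat and a :: 'a and b :: real
  assumes fin: "\<And>i. i < n \<Longrightarrow> finite (Om i)"
    and ne: "\<And>i. i < n \<Longrightarrow> Om i \<noteq> {}"
    and range: "\<And>x. x \<in> prodsp n Om \<Longrightarrow> 0 \<le> f x \<and> f x \<le> M"
    and j: "j < n" and a: "a \<in> Om j"
    and kj: "card (Om j) \<ge> 2"
    and canal: "weakly_canalizing n Om f j a b"
  shows "avg_sens n Om f \<le> M^2 / 4
           + (real (card (Om j)) - 1) / real (card (Om j)) * avg_sens n (Om(j := Om j - {a})) f"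
proof -
  define Om' where "Om' = Om(j := Om j - {a})"
  define c where "c = (real (card (Om j)) - 1) / real (card (Om j))"
  have c0: "c \<ge> 0" unfolding c_def using kj by simp
  have rest: "(\<Sum>i\<in>{..<n}-{j}. influence n Om f i) = c * (\<Sum>i\<in>{..<n}-{j}. influence n Om' f i)"
    unfolding sum_distrib_left c_def Om'_def
    by (intro sum.cong refl main_aux[OF fin ne j a kj canal]) auto
  have finA: "finite (PiE {..<n} Om)" using fin by (auto intro: finite_PiE)
  have neA: "PiE {..<n} Om \<noteq> {}" using ne by (auto simp: PiE_eq_empty_iff)
  have ij: "influence n Om f j \<le> M^2/4"
    unfolding influence_def prodsp_def
  proof (rule avg_le[OF finA neA])
    fix x assume x: "x \<in> PiE {..<n} Om"
    show "coord_var Om f j x \<le> M^2/4" unfolding coord_var_def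
    proof (rule popoviciu[OF fin[OF j] ne[OF j]])
      fix y assume "y \<in> Om j"
      hence "x(j := y) \<in> prodsp n Om" using x j PiE_fun_upd[of y Om j x "{..<n}"]
        by (simp add: insert_absorb prodsp_def)
      thus "0 \<le> f (x(j := y)) \<and> f (x(j := y)) \<le> M" by (rule range)
    qed
  qed
  have ij': "influence n Om' f j \<ge> 0"
    unfolding influence_def by (intro avg_nonneg coord_var_nonneg)
  have e1: "avg_sens n Om f = influence n Om f j + (\<Sum>i\<in>{..<n}-{j}. influence n Om f i)"
    unfolding avg_sens_def using j by (simp add: sum.remove)
  have e2: "avg_sens n Om' f = influence n Om' f j + (\<Sum>i\<in>{..<n}-{j}. influence n Om' f i)"
    unfolding avg_sens_def using j by (simp add: sum.remove)
  have "avg_sens n Om f \<le> M^2/4 + c * avg_sens n Om' f"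
  proof -
    have "0 \<le> c * influence n Om' f j" using c0 ij' by simp
    thus ?thesis using e1 e2 rest ij by (simp add: distrib_left)
  qed
  thus ?thesis unfolding c_def Om'_def .
qed

end
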